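(* Let $n\ge 3$ and let $v_1<\cdots<v_{n-1}$ be positive integers with $\mathrm{ML}(v_1,\ldots,v_{n-1})=L>\frac1n$. Then $\mathrm{ML}(v_1,\ldots,v_n)\ge\frac1n$ for every positive integer $v_n$ with $v_n\ge v_{n-1}(2v_{n-1}-1)$.
   Context: For a real number $x$, $\Vert x\Vert$ denotes the distance from $x$ to the nearest integer. For positive integers $v_1,\ldots,v_k$, the maximum loneliness is $\mathrm{ML}(v_1,\ldots,v_k)=\max_{t\in\mathbb{R}}\min_{1\le i\le k}\Vert t v_i\Vert$. *)

theory Defs
  imports Complex_Main
begin

definition dist_int :: "real \<Rightarrow> real" where
  "dist_int x = \<bar>x - of_int (round x)\<bar>"

text \<open>Maximum loneliness of the speeds v 1, ..., v k:
  the supremum over all real t of the minimum of dist_int (t * v i), 1 \<le> i \<le> k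
  (this supremum is attained, so it is the maximum of the paper).\<close>
definition max_loneliness :: "nat \<Rightarrow> (nat \<Rightarrow> nat) \<Rightarrow> real" where
  "max_loneliness k v = (SUP t::real. Min ((\<lambda>i. dist_int (t * real (v i))) ` {1..k}))"

end

theory Submission
  imports Defs
begin

lemma dist_int_le: "dist_int x \<le> \<bar>x - of_int j\<bar>"
  unfolding dist_int_def by (rule round_diff_minimal)

lemma dist_int_le1: "dist_int x \<le> 1"
proof -
  have "dist_int x \<le> \<bar>x - of_int (floor x)\<bar>" by (rule dist_int_le)
  also have "\<dots> \<le> 1" by linarith
  finally show ?thesis .
qed

lemma dist_int_ge:
  assumes "of_int k + c \<le> x" "x \<le> of_int k + 1 - c"
  shows "c \<le> dist_int x"
proof -
  have "round x \<le> k \<or> round x \<ge> k + 1" by linarith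
  then show ?thesis
  proof
    assume "round x \<le> k"
    then have "real_of_int (round x) \<le> of_int k" by simp
    then show ?thesis using assms unfolding dist_int_def by linarith
  next
    assume "round x \<ge> k + 1"
    then have "real_of_int (round x) \<ge> of_int k + 1" by simp
    then show ?thesis using assms unfolding dist_int_def by linarith
  qed
qed

lemma gap:
  fixes a b c w :: real
  assumes "0 < c" "c \<le> 1/2" "0 < w" "a \<le> b" "2 * c \<le> (b - a) * w"
  shows "\<exists>t\<in>{a..b}. c \<le> dist_int (t * w)"
proof (cases "c \<le> dist_int (a * w)")
  case True
  then show ?thesis using assms by auto
next
  case False
  define m where "m = round (a * w)"
  have lt: "\<bar>a * w - of_int m\<bar> < c" using False unfolding dist_int_def m_def by simp
  define t where "t = (of_int m + c) / w"
  have tw: "t * w = of_int m + c" using assms(3) unfolding t_def by simp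
  have "a * w \<le> t * w" using lt tw by linarith
  then have "a \<le> t" using assms(3) by simp
  moreover have "t * w \<le> b * w"
  proof -
    have "t * w - a * w < 2 * c" using lt tw by linarith
    also have "\<dots> \<le> b * w - a * w" using assms(5) by (simp add: algebra_simps)
    finally show ?thesis by simp
  qed
  then have "t \<le> b" using assms(3) by simp
  moreover have "c \<le> dist_int (t * w)"
    by (rule dist_int_ge[of m]) (use tw assms in auto)
  ultimately show ?thesis by auto
qed

theorem lemma8p4:
  fixes n :: nat and v :: "nat \<Rightarrow> nat" and L :: real
  assumes "n \<ge> 3"
    and "\<forall>i\<in>{1..n-1}. v i > 0"
    and "\<forall>i j. 1 \<le> i \<and> i < j \<and> j \<le> n - 1 \<longrightarrow> v i < v j"
    and "max_loneliness (n - 1) v = L"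
    and "L > 1 / real n"
    and "v n > 0"
    and "real (v n) \<ge> real (v (n - 1)) * (2 * real (v (n - 1)) - 1)"
  shows "max_loneliness n v \<ge> 1 / real n"
proof -
  define N where "N = n - 1"
  define c where "c = 1 / real n"
  have nN: "n = N + 1" "N \<ge> 2" using assms(1) unfolding N_def by auto
  have c0: "0 < c" and c3: "c \<le> 1/3" using assms(1) unfolding c_def by (auto simp: field_simps)
  have vpos: "\<And>i. i \<in> {1..N} \<Longrightarrow> v i > 0" using assms(2) unfolding N_def by auto
  have mono: "\<And>i j. 1 \<le> i \<Longrightarrow> i < j \<Longrightarrow> j \<le> N \<Longrightarrow> v i < v j"
    using assms(3) unfolding N_def by auto
  define f where "f = (\<lambda>k t. Min ((\<lambda>i. dist_int (t * real (v i))) ` {1..k}))"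
  have fle: "f k t \<le> 1" if "k \<ge> 1" for k t
  proof -
    have "f k t \<le> dist_int (t * real (v 1))" unfolding f_def
      by (rule Min_le) (use that in auto)
    also have "\<dots> \<le> 1" by (rule dist_int_le1)
    finally show ?thesis .
  qed
  have bdd: "bdd_above (range (f k))" if "k \<ge> 1" for k
    using fle[OF that] by (intro bdd_aboveI[of _ 1]) auto
  have "c < (SUP t. f N t)" using assms(4,5) unfolding max_loneliness_def f_def N_def c_def by simp
  then obtain t0 where "c < f N t0"
    using less_cSUP_iff[OF _ bdd[of N]] nN by auto
  note fN = this
  have d0: "c < dist_int (t0 * real (v i))" if "i \<in> {1..N}" for i
    using fN that unfolding f_def by auto
  define k where "k = (\<lambda>i. floor (t0 * real (v i)))"
  have k1: "of_int (k i) + c < t0 * real (v i)" if "i \<in> {1..N}" for i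
  proof -
    have "dist_int (t0 * real (v i)) \<le> \<bar>t0 * real (v i) - of_int (k i)\<bar>" by (rule dist_int_le)
    then show ?thesis using d0[OF that] unfolding k_def by linarith
  qed
  have k2: "t0 * real (v i) < of_int (k i) + 1 - c" if "i \<in> {1..N}" for i
  proof -
    have "dist_int (t0 * real (v i)) \<le> \<bar>t0 * real (v i) - of_int (k i + 1)\<bar>" by (rule dist_int_le)
    then show ?thesis using d0[OF that] unfolding k_def by linarith
  qed
  define A where "A = (\<lambda>i. (of_int (k i) + c) / real (v i))"
  define B where "B = (\<lambda>i. (of_int (k i) + 1 - c) / real (v i))"
  have At: "A i < t0" if "i \<in> {1..N}" for i
    using k1[OF that] vpos[OF that] unfolding A_def by (simp add: divide_less_eq mult.commute)
  have Bt: "t0 < B i" if "i \<in> {1..N}" for i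
    using k2[OF that] vpos[OF that] unfolding B_def by (simp add: less_divide_eq mult.commute)
  define a where "a = Max (A ` {1..N})"
  define b where "b = Min (B ` {1..N})"
  have ne: "{1..N} \<noteq> {}" using nN by auto
  have "a \<in> A ` {1..N}" unfolding a_def by (rule Max_in) (use ne in auto)
  then obtain i where i: "i \<in> {1..N}" "a = A i" by auto
  have "b \<in> B ` {1..N}" unfolding b_def by (rule Min_in) (use ne in auto)
  then obtain j where j: "j \<in> {1..N}" "b = B j" by auto
  have aA: "A l \<le> a" if "l \<in> {1..N}" for l unfolding a_def using that by auto
  have bB: "b \<le> B l" if "l \<in> {1..N}" for l unfolding b_def using that by auto
  have ab: "a < b" using At[OF i(1)] Bt[OF j(1)] i j by simp
  define V where "V = v N"
  have vleV: "v l \<le> V" if "l \<in> {1..N}" for l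
    using mono[of l N] that unfolding V_def by (cases "l = N") auto
  have V2: "V \<ge> 2"
  proof -
    have "v 1 < v N" using mono[of 1 N] nN by auto
    moreover have "v 1 > 0" using vpos[of 1] nN by auto
    ultimately show ?thesis unfolding V_def by simp
  qed
  have vn: "real (v n) \<ge> real V * (2 * real V - 1)" using assms(7) unfolding V_def N_def by simp
  have key: "2 * c \<le> (b - a) * real (v n)"
  proof (cases "i = j")
    case True
    have vi: "real (v i) > 0" using vpos[OF i(1)] by simp
    have "b - a = ((of_int (k i) + 1 - c) - (of_int (k i) + c)) / real (v i)" using i j True unfolding A_def B_def
      by (metis diff_divide_distrib)
    also have "\<dots> = (1 - 2 * c) / real (v i)" by simp
    finally have "b - a = (1 - 2 * c) / real (v i)" .
    moreover have "2 * real (v i) \<le> real (v n)"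
    proof -
      have "real (v i) \<le> real V" using vleV[OF i(1)] by simp
      moreover have "real V \<ge> 2" using V2 by simp
      moreover have "real V * 3 \<le> real V * (2 * real V - 1)"
        by (rule mult_left_mono) (use V2 in auto)
      ultimately show ?thesis using vn by linarith
    qed
    moreover have "c \<le> 1 - 2 * c" using c3 by simp
    ultimately have "(b - a) * real (v n) \<ge> (c / real (v i)) * (2 * real (v i))"
      using vi c0 by (smt (verit, best) divide_right_mono mult_mono times_divide_eq_left divide_nonneg_pos)
    then show ?thesis using vi by simp
  next
    case False
    have vi: "real (v i) > 0" using vpos[OF i(1)] by simp
    have vj: "real (v j) > 0" using vpos[OF j(1)] by simp
    have npos: "real n > 0" using assms(1) by simp
    define Z where "Z = (int n * (k j + 1) - 1) * int (v i) - (int n * k i + 1) * int (v j)"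
    have eq: "b - a = real_of_int Z / (real n * real (v i) * real (v j))"
      using vi vj npos unfolding i(2) j(2) A_def B_def Z_def c_def by (simp add: field_simps)
    have "0 < real_of_int Z / (real n * real (v i) * real (v j))" using ab eq by simp
    moreover have pp: "0 < real n * real (v i) * real (v j)" using vi vj npos by simp
    ultimately have "0 < real_of_int Z" by (auto simp: zero_less_divide_iff)
    then have "Z > 0" by simp
    then have Z1: "real_of_int Z \<ge> 1" by simp
    have prod: "2 * v i * v j \<le> v n"
    proof -
      have "v i \<noteq> v j"
        using mono[of i j] mono[of j i] i(1) j(1) False by (cases "i < j") auto
      then have "v i * v j \<le> V * (V - 1)"
      proof (cases "v i < v j")
        case True
        then have "v i \<le> V - 1" using vleV[OF j(1)] by simp
        then show ?thesis using vleV[OF j(1)] mult_le_mono[of "v i" "V - 1" "v j" V] by (simp add: mult.commute)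
      next
        case False
        then have "v j < v i" using \<open>v i \<noteq> v j\<close> by simp
        then have "v j \<le> V - 1" using vleV[OF i(1)] by simp
        then show ?thesis using vleV[OF i(1)] mult_le_mono[of "v j" "V - 1" "v i" V] by (simp add: mult.commute)
      qed
      moreover have "real (2 * V * (V - 1)) \<le> real (v n)"
      proof -
        have "real (2 * V * (V - 1)) = 2 * real V * (real V - 1)" using V2 by (simp add: of_nat_diff)
        also have "\<dots> \<le> real V * (2 * real V - 1)" by (simp add: algebra_simps)
        finally show ?thesis using vn by linarith
      qed
      then have "2 * V * (V - 1) \<le> v n" by (simp only: of_nat_le_iff)
      ultimately show ?thesis by linarith
    qed
    have "(b - a) * real (v n) \<ge> (1 / (real n * real (v i) * real (v j))) * (2 * real (v i) * real (v j))"
    proof (rule mult_mono)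
      show "1 / (real n * real (v i) * real (v j)) \<le> b - a"
        unfolding eq using Z1 vi vj npos by (simp add: divide_right_mono)
      show "2 * real (v i) * real (v j) \<le> real (v n)" using prod
        by (metis of_nat_le_iff of_nat_mult of_nat_numeral)
    qed (use ab in auto)
    then show ?thesis using vi vj npos unfolding c_def by simp
  qed
  obtain t where t: "t \<in> {a..b}" "c \<le> dist_int (t * real (v n))"
    using gap[OF c0 _ _ _ key] c3 assms(6) ab by auto
  have "c \<le> dist_int (t * real (v l))" if "l \<in> {1..N}" for l
  proof (rule dist_int_ge[of "k l"])
    have vl: "real (v l) > 0" using vpos[OF that] by simp
    have "A l \<le> t" using aA[OF that] t(1) by simp
    then show "of_int (k l) + c \<le> t * real (v l)" using vl unfolding A_def
      by (simp add: divide_le_eq mult.commute)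
    have "t \<le> B l" using bB[OF that] t(1) by simp
    then show "t * real (v l) \<le> of_int (k l) + 1 - c" using vl unfolding B_def
      by (simp add: le_divide_eq mult.commute)
  qed
  then have "c \<le> f n t" unfolding f_def using t(2) nN
    by (subst Min_ge_iff) (auto, metis atLeastAtMost_iff le_Suc_eq)
  also have "f n t \<le> (SUP t. f n t)" by (rule cSUP_upper) (use bdd[of n] nN in auto)
  finally show ?thesis unfolding max_loneliness_def f_def c_def .
qed

end
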